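(* The generic offset polynomial $g(d,\bar x)$ is primitive with respect to $\bar x=(x_1,x_2,x_3)$, i.e. it has no non-constant factor in $\mathbb C[d]$.
   Context: Let $f\in\mathbb C[y_1,y_2,y_3]$ be irreducible, defining a surface $\Sigma$; $f_i=\partial f/\partial y_i$, $h_{\rm imp}=\sum f_i^2$, not identically zero on $\Sigma$. The generic offset $\mathcal O_d(\Sigma)\subset\mathbb C^4$ is the Zariski closure of the projection to $(d,\bar x)$ of the solution set in $(d,\bar x,\bar y,u)$ of: $f(\bar y)=0$; $f_i(\bar y)(x_j-y_j)-f_j(\bar y)(x_i-y_i)=0$ ($i<j$); $\sum_i(x_i-y_i)^2-d^2=0$; $u\,h_{\rm imp}(\bar y)-1=0$. It is a hypersurface, and its square-free defining polynomial $g(d,\bar x)\in\mathbb C[d,\bar x]$ is the generic offset polynomial. *)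

theory Defs
  imports "HOL-Computational_Algebra.Computational_Algebra"
begin

text \<open>Multivariate polynomials are encoded as nested univariate polynomials.
  C[y1,y2,y3] = complex poly poly poly, innermost variable y1, outermost y3.
  C[d,x1,x2,x3] = complex poly poly poly poly, innermost d, then x1, x2, outermost x3.\<close>

definition eval3 :: "complex poly poly poly \<Rightarrow> complex \<Rightarrow> complex \<Rightarrow> complex \<Rightarrow> complex" where
  "eval3 f y1 y2 y3 = poly (poly (poly f [:[:y3:]:]) [:y2:]) y1"

definition eval4 :: "complex poly poly poly poly \<Rightarrow> complex \<Rightarrow> complex \<Rightarrow> complex \<Rightarrow> complex \<Rightarrow> complex" where
  "eval4 g d x1 x2 x3 = poly (poly (poly (poly g [:[:[:x3:]:]:]) [:[:x2:]:]) [:x1:]) d"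

definition pd1 :: "complex poly poly poly \<Rightarrow> complex poly poly poly" where
  "pd1 f = map_poly (map_poly pderiv) f"
definition pd2 :: "complex poly poly poly \<Rightarrow> complex poly poly poly" where
  "pd2 f = map_poly pderiv f"
definition pd3 :: "complex poly poly poly \<Rightarrow> complex poly poly poly" where
  "pd3 f = pderiv f"

definition h_imp :: "complex poly poly poly \<Rightarrow> complex poly poly poly" where
  "h_imp f = (pd1 f)^2 + (pd2 f)^2 + (pd3 f)^2"

definition offset_incidence_proj :: "complex poly poly poly \<Rightarrow> (complex \<times> complex \<times> complex \<times> complex) set" where
  "offset_incidence_proj f = {(d, x1, x2, x3). \<exists>y1 y2 y3 u.
      let f1 = eval3 (pd1 f) y1 y2 y3; f2 = eval3 (pd2 f) y1 y2 y3; f3 = eval3 (pd3 f) y1 y2 y3 in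
      eval3 f y1 y2 y3 = 0 \<and>
      f1 * (x2 - y2) - f2 * (x1 - y1) = 0 \<and>
      f1 * (x3 - y3) - f3 * (x1 - y1) = 0 \<and>
      f2 * (x3 - y3) - f3 * (x2 - y2) = 0 \<and>
      (x1 - y1)^2 + (x2 - y2)^2 + (x3 - y3)^2 - d^2 = 0 \<and>
      u * eval3 (h_imp f) y1 y2 y3 - 1 = 0}"

definition zariski_closure4 :: "(complex \<times> complex \<times> complex \<times> complex) set \<Rightarrow> (complex \<times> complex \<times> complex \<times> complex) set" where
  "zariski_closure4 S = {(d, x1, x2, x3). \<forall>p :: complex poly poly poly poly.
      (\<forall>(e, z1, z2, z3) \<in> S. eval4 p e z1 z2 z3 = 0) \<longrightarrow> eval4 p d x1 x2 x3 = 0}"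

definition generic_offset :: "complex poly poly poly \<Rightarrow> (complex \<times> complex \<times> complex \<times> complex) set" where
  "generic_offset f = zariski_closure4 (offset_incidence_proj f)"

definition const_in_x :: "complex poly \<Rightarrow> complex poly poly poly poly" where
  "const_in_x p = [:[:[:p:]:]:]"

end

theory Submission
  imports Defs
begin

lemma poly_hom_eval:
  fixes E :: "'a::comm_ring_1 \<Rightarrow> 'b::comm_ring_1"
  assumes add: "\<And>a b. E (a + b) = E a + E b" and mul: "\<And>a b. E (a * b) = E a * E b"
    and z: "E 0 = 0"
  shows "E (poly p K) = poly (map_poly E p) (E K)"
proof (induction p)
  case 0 then show ?case by (simp add: z)
next
  case (pCons a p) then show ?case by (simp add: add mul map_poly_pCons z)
qed

lemma lev2: "poly (poly (b::complex poly poly) [:x1:]) d = poly (map_poly (\<lambda>c. poly c d) b) x1"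
  using poly_hom_eval[of "\<lambda>c. poly c d" b "[:x1:]"] by (simp add: poly_mult)

lemma lev3: "poly (poly (poly (a::complex poly poly poly) [:[:x2:]:]) [:x1:]) d
   = poly (map_poly (\<lambda>b. poly (poly b [:x1:]) d) a) x2"
  using poly_hom_eval[of "\<lambda>b. poly (poly b [:x1:]) d" a "[:[:x2:]:]"] by (simp add: poly_mult)

lemma lev4: "eval4 g d x1 x2 x3
   = poly (map_poly (\<lambda>a. poly (poly (poly a [:[:x2:]:]) [:x1:]) d) g) x3"
  unfolding eval4_def
  using poly_hom_eval[of "\<lambda>a. poly (poly (poly a [:[:x2:]:]) [:x1:]) d" g "[:[:[:x3:]:]:]"]
  by (simp add: poly_mult)

lemma dvd1: "poly (c::complex poly) d0 = 0 \<Longrightarrow> [:-d0,1:] dvd c"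
  using poly_eq_0_iff_dvd by blast

lemma dvd2:
  assumes "\<forall>x1. poly (poly (b::complex poly poly) [:x1:]) d0 = 0"
  shows "[:[:-d0,1:]:] dvd b"
proof -
  have m: "map_poly (\<lambda>c. poly c d0) b = 0"
  proof -
    have "poly (map_poly (\<lambda>c. poly c d0) b) x1 = 0" for x1
      using assms lev2[of b x1 d0] by simp
    then show ?thesis using poly_all_0_iff_0 by blast
  qed
  have "[:-d0,1:] dvd coeff b i" for i
  proof -
    have "coeff (map_poly (\<lambda>c. poly c d0) b) i = 0" using m by simp
    then have "poly (coeff b i) d0 = 0" by (simp add: coeff_map_poly)
    then show ?thesis by (rule dvd1)
  qed
  then show ?thesis unfolding const_poly_dvd_iff[of "[:-d0,1:]" b] by blast
qed

lemma dvd3: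
  assumes "\<forall>x1 x2. poly (poly (poly (a::complex poly poly poly) [:[:x2:]:]) [:x1:]) d0 = 0"
  shows "[:[:[:-d0,1:]:]:] dvd a"
proof -
  have m: "map_poly (\<lambda>b. poly (poly b [:x1:]) d0) a = 0" for x1
  proof -
    have "poly (map_poly (\<lambda>b. poly (poly b [:x1:]) d0) a) x2 = 0" for x2
      using assms lev3[of a x2 x1 d0] by simp
    then show ?thesis using poly_all_0_iff_0 by blast
  qed
  have "[:[:-d0,1:]:] dvd coeff a i" for i
  proof (rule dvd2, rule allI)
    fix x1
    have "coeff (map_poly (\<lambda>b. poly (poly b [:x1:]) d0) a) i = 0" using m by simp
    then show "poly (poly (coeff a i) [:x1:]) d0 = 0" by (simp add: coeff_map_poly)
  qed
  then show ?thesis unfolding const_poly_dvd_iff[of "[:[:-d0,1:]:]" a] by blast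
qed

lemma dvd4:
  assumes "\<forall>x1 x2 x3. eval4 g d0 x1 x2 x3 = 0"
  shows "const_in_x [:-d0,1:] dvd g"
proof -
  have m: "map_poly (\<lambda>a. poly (poly (poly a [:[:x2:]:]) [:x1:]) d0) g = 0" for x1 x2
  proof -
    have "poly (map_poly (\<lambda>a. poly (poly (poly a [:[:x2:]:]) [:x1:]) d0) g) x3 = 0" for x3
      using assms lev4[of g d0 x1 x2 x3] by simp
    then show ?thesis using poly_all_0_iff_0 by blast
  qed
  have "[:[:[:-d0,1:]:]:] dvd coeff g i" for i
  proof (rule dvd3, intro allI)
    fix x1 x2
    have "coeff (map_poly (\<lambda>a. poly (poly (poly a [:[:x2:]:]) [:x1:]) d0) g) i = 0" using m by simp
    then show "poly (poly (poly (coeff g i) [:[:x2:]:]) [:x1:]) d0 = 0" by (simp add: coeff_map_poly)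
  qed
  then show ?thesis unfolding const_in_x_def const_poly_dvd_iff[of "[:[:[:-d0,1:]:]:]" g] by blast
qed

lemma cont2: "isCont D t \<Longrightarrow> isCont X1 t \<Longrightarrow>
  isCont (\<lambda>\<tau>. poly (poly (b::complex poly poly) [:X1 \<tau>:]) (D \<tau>)) t"
  by (induction b) (auto intro!: continuous_intros)

lemma cont3: "isCont D t \<Longrightarrow> isCont X1 t \<Longrightarrow> isCont X2 t \<Longrightarrow>
  isCont (\<lambda>\<tau>. poly (poly (poly (a::complex poly poly poly) [:[:X2 \<tau>:]:]) [:X1 \<tau>:]) (D \<tau>)) t"
  by (induction a) (auto intro!: continuous_intros cont2)

lemma cont4: "isCont D t \<Longrightarrow> isCont X1 t \<Longrightarrow> isCont X2 t \<Longrightarrow> isCont X3 t \<Longrightarrow>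
  isCont (\<lambda>\<tau>. eval4 g (D \<tau>) (X1 \<tau>) (X2 \<tau>) (X3 \<tau>)) t"
  unfolding eval4_def by (induction g) (auto intro!: continuous_intros cont3)

lemma eval4_mult: "eval4 (a * b) d x1 x2 x3 = eval4 a d x1 x2 x3 * eval4 b d x1 x2 x3"
  by (simp add: eval4_def poly_mult)

lemma eval4_L: "eval4 (const_in_x [:-d0,1:]) d x1 x2 x3 = d - d0"
  by (simp add: eval4_def const_in_x_def)


lemma eval3_h: "eval3 (h_imp f) y1 y2 y3 =
  (eval3 (pd1 f) y1 y2 y3)^2 + (eval3 (pd2 f) y1 y2 y3)^2 + (eval3 (pd3 f) y1 y2 y3)^2"
  by (simp add: eval3_def h_imp_def power2_eq_square poly_mult)

lemma perturb:
  assumes mem: "(d, x1, x2, x3) \<in> offset_incidence_proj f"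
    and off: "\<forall>d' x1' x2' x3'. (d', x1', x2', x3') \<in> offset_incidence_proj f \<longrightarrow> d' \<noteq> d0
          \<longrightarrow> eval4 q d' x1' x2' x3' = 0"
  shows "eval4 q d x1 x2 x3 = 0"
proof (cases "d = d0")
  case False then show ?thesis using off mem by blast
next
  case True
  from mem obtain y1 y2 y3 u where
    e0: "eval3 f y1 y2 y3 = 0" and
    e12: "eval3 (pd1 f) y1 y2 y3 * (x2 - y2) - eval3 (pd2 f) y1 y2 y3 * (x1 - y1) = 0" and
    e13: "eval3 (pd1 f) y1 y2 y3 * (x3 - y3) - eval3 (pd3 f) y1 y2 y3 * (x1 - y1) = 0" and
    e23: "eval3 (pd2 f) y1 y2 y3 * (x3 - y3) - eval3 (pd3 f) y1 y2 y3 * (x2 - y2) = 0" and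
    ed: "(x1 - y1)^2 + (x2 - y2)^2 + (x3 - y3)^2 - d^2 = 0" and
    eu: "u * eval3 (h_imp f) y1 y2 y3 - 1 = 0"
    unfolding offset_incidence_proj_def by (auto simp: Let_def)
  define n1 where "n1 = eval3 (pd1 f) y1 y2 y3"
  define n2 where "n2 = eval3 (pd2 f) y1 y2 y3"
  define n3 where "n3 = eval3 (pd3 f) y1 y2 y3"
  define h where "h = n1^2 + n2^2 + n3^2"
  define v1 where "v1 = x1 - y1"
  define v2 where "v2 = x2 - y2"
  define v3 where "v3 = x3 - y3"
  have hh: "eval3 (h_imp f) y1 y2 y3 = h" by (simp add: eval3_h h_def n1_def n2_def n3_def)
  have hnz: "h \<noteq> 0" using eu hh by auto
  have c12: "n1 * v2 - n2 * v1 = 0" using e12 by (simp add: n1_def n2_def v1_def v2_def)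
  have c13: "n1 * v3 - n3 * v1 = 0" using e13 by (simp add: n1_def n3_def v1_def v3_def)
  have c23: "n2 * v3 - n3 * v2 = 0" using e23 by (simp add: n2_def n3_def v2_def v3_def)
  define s where "s = n1 * v1 + n2 * v2 + n3 * v3"
  define t where "t = s / h"
  have "v1 * h - n1 * s = n2 * (n2 * v1 - n1 * v2) + n3 * (n3 * v1 - n1 * v3)"
    by (simp add: h_def s_def power2_eq_square algebra_simps)
  also have "\<dots> = 0" using c12 c13 by (simp add: algebra_simps)
  finally have w1: "v1 = t * n1" using hnz by (simp add: t_def field_simps)
  have "v2 * h - n2 * s = n1 * (n1 * v2 - n2 * v1) + n3 * (n3 * v2 - n2 * v3)"
    by (simp add: h_def s_def power2_eq_square algebra_simps)
  also have "\<dots> = 0" using c12 c23 by (simp add: algebra_simps)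
  finally have w2: "v2 = t * n2" using hnz by (simp add: t_def field_simps)
  have "v3 * h - n3 * s = n1 * (n1 * v3 - n3 * v1) + n2 * (n2 * v3 - n3 * v2)"
    by (simp add: h_def s_def power2_eq_square algebra_simps)
  also have "\<dots> = 0" using c13 c23 by (simp add: algebra_simps)
  finally have w3: "v3 = t * n3" using hnz by (simp add: t_def field_simps)
  have dsq: "d^2 = t^2 * h" using ed w1 w2 w3
    by (simp add: v1_def v2_def v3_def h_def power2_eq_square algebra_simps)
  define c0 where "c0 = csqrt h"
  have c0sq: "c0^2 = h" by (simp add: c0_def)
  have "(d - t * c0) * (d + t * c0) = 0" using dsq c0sq
    by (simp add: power2_eq_square algebra_simps)
  then obtain c where csq: "c^2 = h" and dc: "d = t * c"
  proof -
    assume H: "\<And>c. c^2 = h \<Longrightarrow> d = t * c \<Longrightarrow> thesis"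
    from \<open>(d - t * c0) * (d + t * c0) = 0\<close> have "d - t * c0 = 0 \<or> d + t * c0 = 0"
      by (simp only: mult_eq_0_iff)
    then have "d = t * c0 \<or> d = t * (- c0)"
      by (elim disjE) (simp, simp add: eq_neg_iff_add_eq_0[symmetric])
    moreover have "(- c0)^2 = h" using c0sq by simp
    ultimately show thesis using H c0sq by blast
  qed
  have cnz: "c \<noteq> 0" using csq hnz by auto
  define \<phi> where "\<phi> = (\<lambda>\<tau>. eval4 q (\<tau> * c) (y1 + \<tau> * n1) (y2 + \<tau> * n2) (y3 + \<tau> * n3))"
  have inS: "(\<tau> * c, y1 + \<tau> * n1, y2 + \<tau> * n2, y3 + \<tau> * n3) \<in> offset_incidence_proj f" for \<tau>
  proof -
    have "(\<tau> * n1)^2 + (\<tau> * n2)^2 + (\<tau> * n3)^2 - (\<tau> * c)^2 = 0"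
      using csq by (simp add: h_def power2_eq_square algebra_simps)
    then show ?thesis unfolding offset_incidence_proj_def
      apply (simp only: mem_Collect_eq case_prod_conv)
      apply (rule exI[where x=y1], rule exI[where x=y2], rule exI[where x=y3], rule exI[where x=u])
      using e0 eu
      by (simp add: Let_def n1_def[symmetric] n2_def[symmetric] n3_def[symmetric] algebra_simps)
  qed
  have z: "\<phi> \<tau> = 0" if "\<tau> \<noteq> t" for \<tau>
  proof -
    have "\<tau> * c \<noteq> d0" using that cnz True dc by auto
    then show ?thesis using off inS unfolding \<phi>_def by blast
  qed
  have "eventually (\<lambda>\<tau>. \<phi> \<tau> = 0) (at t)"
    unfolding eventually_at_filter by (auto intro!: always_eventually z)
  then have l0: "\<phi> \<midarrow>t\<rightarrow> 0" by (rule tendsto_eventually)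
  have "isCont \<phi> t" unfolding \<phi>_def by (intro cont4 continuous_intros)
  then have "\<phi> \<midarrow>t\<rightarrow> \<phi> t" by (simp add: isCont_def)
  then have "\<phi> t = 0" using l0 LIM_unique by blast
  moreover have "\<phi> t = eval4 q d x1 x2 x3"
    unfolding \<phi>_def using dc w1 w2 w3 by (simp add: v1_def v2_def v3_def algebra_simps)
  ultimately show ?thesis by simp
qed

lemma not_unit_L: "\<not> is_unit (const_in_x [:-d0,1:])"
  by (simp add: const_in_x_def is_unit_const_poly_iff is_unit_poly_iff)

theorem mainTheorem7:
  fixes f :: "complex poly poly poly" and g :: "complex poly poly poly poly"
  assumes f_irr: "irreducible f"
    and h_nonzero_on_surface: "\<exists>y1 y2 y3. eval3 f y1 y2 y3 = 0 \<and> eval3 (h_imp f) y1 y2 y3 \<noteq> 0"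
    and g_nonzero: "g \<noteq> 0"
    and g_squarefree: "squarefree g"
    and g_defines: "{(d, x1, x2, x3). eval4 g d x1 x2 x3 = 0} = generic_offset f"
  shows "\<forall>p :: complex poly. const_in_x p dvd g \<longrightarrow> degree p = 0"
proof (intro allI impI)
  fix p :: "complex poly"
  assume dv: "const_in_x p dvd g"
  show "degree p = 0"
  proof (rule ccontr)
    assume "degree p \<noteq> 0"
    then obtain d0 where "poly p d0 = 0"
      using fundamental_theorem_of_algebra[of p] constant_degree[of p] by metis
    then obtain r where pr: "p = [:-d0,1:] * r" using dvd1 by blast
    define L where "L = const_in_x [:-d0,1:]"
    have "const_in_x p = L * const_in_x r"
      by (simp add: pr L_def const_in_x_def)
    then have "L dvd g" using dv by (metis dvd_mult_left)
    then obtain q where gq: "g = L * q" by (elim dvdE)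
    have ev: "eval4 g d x1 x2 x3 = (d - d0) * eval4 q d x1 x2 x3" for d x1 x2 x3
      by (simp add: gq eval4_mult L_def eval4_L)
    let ?S = "offset_incidence_proj f"
    have gS: "eval4 g d x1 x2 x3 = 0" if "(d, x1, x2, x3) \<in> ?S" for d x1 x2 x3
    proof -
      have "(d, x1, x2, x3) \<in> generic_offset f"
        using that unfolding generic_offset_def zariski_closure4_def by fastforce
      then show ?thesis using g_defines by blast
    qed
    have off: "\<forall>d' x1' x2' x3'. (d', x1', x2', x3') \<in> ?S \<longrightarrow> d' \<noteq> d0
          \<longrightarrow> eval4 q d' x1' x2' x3' = 0"
      using gS ev by fastforce
    have qS: "\<forall>(e, z1, z2, z3) \<in> ?S. eval4 q e z1 z2 z3 = 0"
      using perturb[OF _ off] by blast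
    have "eval4 q d0 x1 x2 x3 = 0" for x1 x2 x3
    proof -
      have "(d0, x1, x2, x3) \<in> {(d, x1, x2, x3). eval4 g d x1 x2 x3 = 0}" using ev by simp
      then have "(d0, x1, x2, x3) \<in> zariski_closure4 ?S"
        using g_defines by (simp add: generic_offset_def)
      then show ?thesis using qS unfolding zariski_closure4_def by blast
    qed
    then have "L dvd q" unfolding L_def by (intro dvd4) blast
    then have "L^2 dvd g" by (simp add: gq power2_eq_square)
    then have "is_unit L" using g_squarefree by (simp add: squarefree_def)
    then show False using not_unit_L L_def by blast
  qed
qed

end
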